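(* Let $0<\varepsilon<2/9$ and let $\mathbf{U}$ be the $7\times 7$ matrix $$\mathbf{U}=\begin{pmatrix} 0 & -1 & \varepsilon & -10 & -\tfrac13+\varepsilon & -\tfrac13+\varepsilon & -\tfrac13+\varepsilon\\ \varepsilon & 0 & -1 & -10 & -\tfrac13+\varepsilon & -\tfrac13+\varepsilon & -\tfrac13+\varepsilon\\ -1 & \varepsilon & 0 & -10 & -\tfrac13+\varepsilon & -\tfrac13+\varepsilon & -\tfrac13+\varepsilon\\ -2 & -2 & 2 & 0 & -\tfrac13 & -\tfrac13 & -\tfrac13\\ -\tfrac13 & -\tfrac13 & -\tfrac13 & 10 & 0 & -1 & \varepsilon\\ -\tfrac13 & -\tfrac13 & -\tfrac13 & 10 & \varepsilon & 0 & -1\\ -\tfrac13 & -\tfrac13 & -\tfrac13 & 10 & -1 & \varepsilon & 0 \end{pmatrix},\qquad \mathbf{R}=\begin{pmatrix} 0 & -1 & \varepsilon\\ \varepsilon & 0 & -1\\ -1 & \varepsilon & 0\end{pmatrix}.$$ Let $\mathbf{x}(\cdot)$ be a solution of the best-reply dynamics in the game with payoff matrix $\mathbf{U}$ such that neither $x_1(0)=x_2(0)=x_3(0)$ nor $x_5(0)=x_6(0)=x_7(0)$. Set $\lambda=x_1+x_2+x_3$, $\mu=x_5+x_6+x_7$ (these are positive for all $t\ge0$), $\bar{\mathbf{x}}=(x_1,x_2,x_3)/\lambda$ and $\hat{\mathbf{x}}=(x_5,x_6,x_7)/\mu$. Then for almost every $t\ge 0$, $$\dot{\bar{\mathbf{x}}}\in\Big(1+\frac{\dot\lambda}{\lambda}\Big)\big(BR_{\mathbf{R}}(\bar{\mathbf{x}})-\bar{\mathbf{x}}\big)\quad\text{and}\quad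 \dot{\hat{\mathbf{x}}}\in\Big(1+\frac{\dot\mu}{\mu}\Big)\big(BR_{\mathbf{R}}(\hat{\mathbf{x}})-\hat{\mathbf{x}}\big).$$
   Context: $S_n=\{\mathbf{x}\in\mathbb{R}_+^n:\sum_i x_i=1\}$. For a square matrix $\mathbf{A}$ of size $n$, $BR_{\mathbf{A}}(\mathbf{x})=\{\mathbf{y}\in S_n:\mathbf{y}\cdot\mathbf{A}\mathbf{x}=\max_{\mathbf{z}\in S_n}\mathbf{z}\cdot\mathbf{A}\mathbf{x}\}$. The best-reply dynamics in the game with payoff matrix $\mathbf{U}$ is the differential inclusion $\dot{\mathbf{x}}\in BR_{\mathbf{U}}(\mathbf{x})-\mathbf{x}$; a solution is an absolutely continuous $\mathbf{x}:\mathbb{R}_+\to S_7$ satisfying it for almost every $t$. *)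

theory Defs
  imports "HOL-Analysis.Analysis"
begin

(* Vectors of R^n are represented as functions nat => real, indices 0..n-1
   (paper index k corresponds to index k-1 here); entries outside are 0. *)
definition std_simplex :: "nat \<Rightarrow> (nat \<Rightarrow> real) set" where
  "std_simplex n = {x. (\<forall>i<n. 0 \<le> x i) \<and> (\<Sum>i<n. x i) = 1 \<and> (\<forall>i\<ge>n. x i = 0)}"

definition bil :: "nat \<Rightarrow> (nat \<Rightarrow> nat \<Rightarrow> real) \<Rightarrow> (nat \<Rightarrow> real) \<Rightarrow> (nat \<Rightarrow> real) \<Rightarrow> real" where
  "bil n A y x = (\<Sum>i<n. y i * (\<Sum>j<n. A i j * x j))"

definition BR :: "nat \<Rightarrow> (nat \<Rightarrow> nat \<Rightarrow> real) \<Rightarrow> (nat \<Rightarrow> real) \<Rightarrow> (nat \<Rightarrow> real) set" where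
  "BR n A x = {y \<in> std_simplex n. \<forall>z\<in>std_simplex n. bil n A z x \<le> bil n A y x}"

definition abs_cont_on :: "real \<Rightarrow> real \<Rightarrow> (real \<Rightarrow> real) \<Rightarrow> bool" where
  "abs_cont_on a b f \<longleftrightarrow>
     (\<forall>e>0. \<exists>d>0. \<forall>(m::nat) (u::nat\<Rightarrow>real) v.
        (\<forall>k<m. a \<le> u k \<and> u k \<le> v k \<and> v k \<le> b) \<and>
        (\<forall>k<m. \<forall>l<m. k \<noteq> l \<longrightarrow> v k \<le> u l \<or> v l \<le> u k) \<and>
        (\<Sum>k<m. v k - u k) < d
        \<longrightarrow> (\<Sum>k<m. \<bar>f (v k) - f (u k)\<bar>) < e)"

definition BR_solution :: "nat \<Rightarrow> (nat \<Rightarrow> nat \<Rightarrow> real) \<Rightarrow> (real \<Rightarrow> nat \<Rightarrow> real) \<Rightarrow> bool" where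
  "BR_solution n U x \<longleftrightarrow>
     (\<forall>t\<ge>0. x t \<in> std_simplex n) \<and>
     (\<forall>i<n. \<forall>T\<ge>0. abs_cont_on 0 T (\<lambda>t. x t i)) \<and>
     (AE t in lborel. 0 \<le> t \<longrightarrow>
        (\<exists>d. (\<forall>i<n. ((\<lambda>s. x s i) has_real_derivative d i) (at t)) \<and>
             (\<exists>y\<in>BR n U (x t). \<forall>i<n. d i = y i - x t i)))"

definition matU :: "real \<Rightarrow> nat \<Rightarrow> nat \<Rightarrow> real" where
  "matU e i j = (if i < 7 \<and> j < 7 then
     [[0, -1, e, -10, -1/3+e, -1/3+e, -1/3+e],
      [e, 0, -1, -10, -1/3+e, -1/3+e, -1/3+e],
      [-1, e, 0, -10, -1/3+e, -1/3+e, -1/3+e],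
      [-2, -2, 2, 0, -1/3, -1/3, -1/3],
      [-1/3, -1/3, -1/3, 10, 0, -1, e],
      [-1/3, -1/3, -1/3, 10, e, 0, -1],
      [-1/3, -1/3, -1/3, 10, -1, e, 0]] ! i ! j else 0)"

definition matR :: "real \<Rightarrow> nat \<Rightarrow> nat \<Rightarrow> real" where
  "matR e i j = (if i < 3 \<and> j < 3 then
     [[0, -1, e], [e, 0, -1], [-1, e, 0]] ! i ! j else 0)"

end

theory Submission
  imports Defs
begin


lemma deriv_local:
  fixes f :: "real \<Rightarrow> real"
  assumes "(f has_real_derivative D) (at t)" "0 \<le> D" "0 < \<epsilon>"
  shows "\<exists>r>0. \<forall>s. dist s t < r \<longrightarrow> (t \<le> s \<longrightarrow> -\<epsilon> * (s - t) \<le> f s - f t) \<and> (s \<le> t \<longrightarrow> -\<epsilon> * (t - s) \<le> f t - f s)"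
proof -
  have "((\<lambda>y. (f y - f t) / (y - t)) \<longlongrightarrow> D) (at t)"
    using assms(1) by (simp add: has_field_derivative_iff)
  then have "\<forall>\<^sub>F y in at t. dist ((f y - f t) / (y - t)) D < \<epsilon>"
    using assms(3) by (rule tendstoD)
  then obtain r where r: "r > 0" "\<And>y. y \<noteq> t \<Longrightarrow> dist y t < r \<Longrightarrow> dist ((f y - f t) / (y - t)) D < \<epsilon>"
    unfolding eventually_at by auto
  show ?thesis
  proof (intro exI[of _ r] conjI allI impI)
    show "r > 0" by fact
  next
    fix s assume s: "dist s t < r" "t \<le> s"
    show "-\<epsilon> * (s - t) \<le> f s - f t"
    proof (cases "s = t")
      case False
      then have "s > t" using s by auto
      have "dist ((f s - f t) / (s - t)) D < \<epsilon>" using r(2)[OF False s(1)] .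
      then have "-\<epsilon> < (f s - f t) / (s - t)" using assms(2) by (auto simp: dist_real_def)
      then show ?thesis using \<open>s > t\<close> by (simp add: field_simps)
    qed simp
  next
    fix s assume s: "dist s t < r" "s \<le> t"
    show "-\<epsilon> * (t - s) \<le> f t - f s"
    proof (cases "s = t")
      case False
      then have "s < t" using s by auto
      have "dist ((f s - f t) / (s - t)) D < \<epsilon>" using r(2)[OF False s(1)] .
      moreover have "(f s - f t) / (s - t) = (f t - f s) / (t - s)"
        using False by (simp add: field_simps)
      ultimately have "-\<epsilon> < (f t - f s) / (t - s)" using assms(2) by (auto simp: dist_real_def)
      then show ?thesis using \<open>s < t\<close> by (simp add: field_simps)
    qed simp
  qed
qed

lemma cbox_real_nonempty:
  fixes K :: "real set"
  assumes "K = cbox c d" "x \<in> K"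
  shows "K = {Inf K..Sup K} \<and> Inf K \<le> x \<and> x \<le> Sup K"
proof -
  have "c \<le> d" using assms by auto
  then have "Inf K = c" "Sup K = d" using assms by auto
  then show ?thesis using assms by auto
qed

lemma mono_AC:
  fixes f :: "real \<Rightarrow> real" and a b :: real and N :: "real set"
  assumes ab: "a \<le> b"
  and N: "N \<in> null_sets lborel"
  and der: "\<And>t. a \<le> t \<Longrightarrow> t \<le> b \<Longrightarrow> t \<notin> N \<Longrightarrow> \<exists>D\<ge>0. (f has_real_derivative D) (at t)"
  and ac: "\<And>\<epsilon>. \<epsilon> > 0 \<Longrightarrow> \<exists>\<delta>>0. \<forall>(m::nat) u v. (\<forall>k<m. a \<le> u k \<and> u k \<le> v k \<and> v k \<le> b) \<and>
        (\<forall>k<m. \<forall>l<m. k \<noteq> l \<longrightarrow> v k \<le> u l \<or> v l \<le> u k) \<and> (\<Sum>k<m. v k - u k) < \<delta>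
        \<longrightarrow> -\<epsilon> < (\<Sum>k<m. f (v k) - f (u k))"
  shows "f a \<le> f b"
proof -
  have key: "f a \<le> f b + \<epsilon> * (b - a) + \<epsilon>" if \<epsilon>: "\<epsilon> > 0" for \<epsilon>
  proof -
    obtain \<delta> where \<delta>: "\<delta> > 0" and acd: "\<And>(m::nat) u v. (\<forall>k<m. a \<le> u k \<and> u k \<le> v k \<and> v k \<le> b) \<Longrightarrow>
        (\<forall>k<m. \<forall>l<m. k \<noteq> l \<longrightarrow> v k \<le> u l \<or> v l \<le> u k) \<Longrightarrow> (\<Sum>k<m. v k - u k) < \<delta>
        \<Longrightarrow> -\<epsilon> < (\<Sum>k<m. f (v k) - f (u k))"
      using ac[OF \<epsilon>] by blast
    have Nl: "N \<in> null_sets lebesgue" using N by (rule null_sets_completionI)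
    then have "N \<in> sets lebesgue" by auto
    then obtain T where T: "open T" "N \<subseteq> T" "(T - N) \<in> lmeasurable" "emeasure lebesgue (T - N) < ennreal \<delta>"
      using sets_lebesgue_outer_open \<delta> by metis
    have Nf: "N \<in> lmeasurable" using Nl by (auto simp: fmeasurable_def null_sets_def)
    have TU: "T = (T - N) \<union> N" using T by auto
    have Tl: "T \<in> lmeasurable" using T(3) Nf by (subst TU) (rule fmeasurable.Un)
    have "measure lebesgue T \<le> measure lebesgue (T - N) + measure lebesgue N"
      by (subst TU) (rule measure_Un_le, use T(3) Nf in auto)
    also have "measure lebesgue N = 0" using Nl by (simp add: measure_eq_0_null_sets)
    also have "measure lebesgue (T - N) < \<delta>"
      using T(3,4) \<delta> by (simp add: emeasure_eq_measure2 ennreal_less_iff)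
    finally have mT: "measure lebesgue T < \<delta>" by simp
    have ex: "\<forall>t. \<exists>r>0. (t \<in> N \<longrightarrow> ball t r \<subseteq> T) \<and>
        (t \<notin> N \<and> a \<le> t \<and> t \<le> b \<longrightarrow> (\<forall>s. dist s t < r \<longrightarrow> (t \<le> s \<longrightarrow> -\<epsilon> * (s - t) \<le> f s - f t) \<and> (s \<le> t \<longrightarrow> -\<epsilon> * (t - s) \<le> f t - f s)))"
    proof
      fix t
      show "\<exists>r>0. (t \<in> N \<longrightarrow> ball t r \<subseteq> T) \<and>
        (t \<notin> N \<and> a \<le> t \<and> t \<le> b \<longrightarrow> (\<forall>s. dist s t < r \<longrightarrow> (t \<le> s \<longrightarrow> -\<epsilon> * (s - t) \<le> f s - f t) \<and> (s \<le> t \<longrightarrow> -\<epsilon> * (t - s) \<le> f t - f s)))"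
      proof (cases "t \<in> N")
        case True
        then obtain r where "r > 0" "ball t r \<subseteq> T" using T(1,2) openE by blast
        then show ?thesis using True by auto
      next
        case False
        show ?thesis
        proof (cases "a \<le> t \<and> t \<le> b")
          case True
          then obtain D where "D \<ge> 0" "(f has_real_derivative D) (at t)" using der False by blast
          then obtain r where "r > 0" "\<forall>s. dist s t < r \<longrightarrow> (t \<le> s \<longrightarrow> -\<epsilon> * (s - t) \<le> f s - f t) \<and> (s \<le> t \<longrightarrow> -\<epsilon> * (t - s) \<le> f t - f s)"
            using deriv_local \<epsilon> by blast
          then show ?thesis using False by auto
        next
          case False2: False
          show ?thesis using False False2 by (intro exI[of _ 1]) auto
        qed
      qed
    qed
    obtain r where r: "\<And>t. r t > 0" "\<And>t. t \<in> N \<Longrightarrow> ball t (r t) \<subseteq> T"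
      "\<And>t s. t \<notin> N \<Longrightarrow> a \<le> t \<Longrightarrow> t \<le> b \<Longrightarrow> dist s t < r t \<Longrightarrow> t \<le> s \<Longrightarrow> -\<epsilon> * (s - t) \<le> f s - f t"
      "\<And>t s. t \<notin> N \<Longrightarrow> a \<le> t \<Longrightarrow> t \<le> b \<Longrightarrow> dist s t < r t \<Longrightarrow> s \<le> t \<Longrightarrow> -\<epsilon> * (t - s) \<le> f t - f s"
    proof -
      from choice[OF ex] obtain r where rr: "\<forall>t. r t > 0 \<and> (t \<in> N \<longrightarrow> ball t (r t) \<subseteq> T) \<and>
        (t \<notin> N \<and> a \<le> t \<and> t \<le> b \<longrightarrow> (\<forall>s. dist s t < r t \<longrightarrow> (t \<le> s \<longrightarrow> -\<epsilon> * (s - t) \<le> f s - f t) \<and> (s \<le> t \<longrightarrow> -\<epsilon> * (t - s) \<le> f t - f s)))"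
        by blast
      show ?thesis by (rule that[of r]) (use rr in auto)
    qed
    have "gauge (\<lambda>t. ball t (r t))" using r(1) by (simp add: gauge_def)
    then obtain p where p: "p tagged_division_of {a..b}" "(\<lambda>t. ball t (r t)) fine p"
      using fine_division_exists_real by blast
    have pfin: "finite p" using p(1) by auto
    have Kform: "K = {Inf K..Sup K} \<and> Inf K \<le> x \<and> x \<le> Sup K \<and> a \<le> Inf K \<and> Sup K \<le> b \<and> K \<subseteq> ball x (r x) \<and> Inf K \<in> K \<and> Sup K \<in> K"
      if xK: "(x, K) \<in> p" for x K
    proof -
      obtain c d where K: "K = cbox c d" using p(1) xK by (meson tagged_division_ofD(4))
      have xK': "x \<in> K" using p(1) xK by (meson tagged_division_ofD(2))
      have cd: "c \<le> x" "x \<le> d" using K xK' by auto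
      have ID: "Inf K = c" "Sup K = d" using K cd by auto
      have "K \<subseteq> {a..b}" using p(1) xK by (meson tagged_division_ofD(3))
      then have ab': "a \<le> c" "d \<le> b" using K cd by auto
      have "K \<subseteq> ball x (r x)" using p(2) xK by (meson fineD)
      then show ?thesis using ID K cd ab' by simp
    qed
    define P where "P = (\<lambda>(x::real, K::real set). x \<in> N \<and> Inf K < Sup K)"
    define p1 where "p1 = {z \<in> p. \<not> P z}"
    define p2 where "p2 = {z \<in> p. P z}"
    have psplit: "p = p1 \<union> p2" "p1 \<inter> p2 = {}" unfolding p1_def p2_def by auto
    have fin12: "finite p1" "finite p2" using pfin unfolding p1_def p2_def by auto
    have tele: "(\<Sum>(x,K)\<in>p. f (Sup K) - f (Inf K)) = f b - f a"
      using additive_tagged_division_1[OF ab p(1)] .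
    have len: "(\<Sum>(x,K)\<in>p. Sup K - Inf K) = b - a"
      using additive_tagged_division_1[OF ab p(1), of "\<lambda>x. x"] .
    have S: "(\<Sum>(x,K)\<in>p. f (Sup K) - f (Inf K)) = (\<Sum>(x,K)\<in>p1. f (Sup K) - f (Inf K)) + (\<Sum>(x,K)\<in>p2. f (Sup K) - f (Inf K))"
      by (subst psplit(1), rule sum.union_disjoint[OF fin12 psplit(2)])
    have S1: "(\<Sum>(x,K)\<in>p1. f (Sup K) - f (Inf K)) \<ge> -\<epsilon> * (b - a)"
    proof -
      have "(\<Sum>(x,K)\<in>p1. f (Sup K) - f (Inf K)) \<ge> (\<Sum>(x,K)\<in>p1. -\<epsilon> * (Sup K - Inf K))"
      proof (rule sum_mono)
        fix z assume z: "z \<in> p1"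
        obtain x K where zxk: "z = (x, K)" by fastforce
        have xk: "(x, K) \<in> p" "\<not> P (x, K)" using z zxk unfolding p1_def by auto
        note KF = Kform[OF xk(1)]
        show "(case z of (x, K) \<Rightarrow> - \<epsilon> * (Sup K - Inf K)) \<le> (case z of (x, K) \<Rightarrow> f (Sup K) - f (Inf K))"
        proof (cases "x \<in> N")
          case True
          then have "Inf K = Sup K" using xk(2) KF unfolding P_def by auto
          then show ?thesis using zxk by simp
        next
          case False
          have mem: "Sup K \<in> K" "Inf K \<in> K" using KF by blast+
          have sub: "K \<subseteq> ball x (r x)" using KF by blast
          have d1: "dist (Sup K) x < r x" "dist (Inf K) x < r x"
            using mem sub by (auto simp: dist_commute)
          have "-\<epsilon> * (Sup K - x) \<le> f (Sup K) - f x"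
            using r(3)[OF False _ _ d1(1)] KF by auto
          moreover have "-\<epsilon> * (x - Inf K) \<le> f x - f (Inf K)"
            using r(4)[OF False _ _ d1(2)] KF by auto
          ultimately show ?thesis using zxk by (simp add: algebra_simps)
        qed
      qed
      also have "(\<Sum>(x,K)\<in>p1. -\<epsilon> * (Sup K - Inf K)) = -\<epsilon> * (\<Sum>(x,K)\<in>p1. Sup K - Inf K)"
        by (simp add: sum_distrib_left case_prod_unfold)
      also have "(\<Sum>(x,K)\<in>p1. Sup K - Inf K) \<le> (\<Sum>(x,K)\<in>p. Sup K - Inf K)"
        using Kform pfin unfolding p1_def
        by (intro sum_mono2) (auto simp: case_prod_unfold, meson order.trans)
      then have "-\<epsilon> * (\<Sum>(x,K)\<in>p1. Sup K - Inf K) \<ge> -\<epsilon> * (b - a)"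
        using len \<epsilon> by simp
      finally show ?thesis .
    qed
    have S2: "(\<Sum>(x,K)\<in>p2. f (Sup K) - f (Inf K)) > -\<epsilon>"
    proof -
      obtain h where h: "bij_betw h {0..<card p2} p2" using ex_bij_betw_nat_finite fin12(2) by blast
      define m where "m = card p2"
      define u where "u = (\<lambda>k. Inf (snd (h k)))"
      define v where "v = (\<lambda>k. Sup (snd (h k)))"
      have hk: "h k \<in> p2" if "k < m" for k using h that unfolding m_def bij_betw_def by auto
      have hk2: "(fst (h k), snd (h k)) \<in> p \<and> P (fst (h k), snd (h k))" if "k < m" for k
        using hk[OF that] unfolding p2_def by auto
      have uv: "snd (h k) = {u k..v k} \<and> a \<le> u k \<and> u k < v k \<and> v k \<le> b \<and> fst (h k) \<in> N \<and> snd (h k) \<subseteq> ball (fst (h k)) (r (fst (h k)))"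
        if "k < m" for k
        using Kform[of "fst (h k)" "snd (h k)"] hk2[OF that] unfolding u_def v_def P_def by auto
      have ord: "v k \<le> u l \<or> v l \<le> u k" if "k < m" "l < m" "k \<noteq> l" for k l
      proof (rule ccontr)
        assume nn: "\<not> (v k \<le> u l \<or> v l \<le> u k)"
        have "h k \<noteq> h l" using h that unfolding bij_betw_def inj_on_def m_def by auto
        then have "interior (snd (h k)) \<inter> interior (snd (h l)) = {}"
          using tagged_division_ofD(5)[OF p(1), of "fst (h k)" "snd (h k)" "fst (h l)" "snd (h l)"] hk2 that
          by auto
        moreover have "(max (u k) (u l) + min (v k) (v l)) / 2 \<in> interior (snd (h k)) \<inter> interior (snd (h l))"
          using uv[OF that(1)] uv[OF that(2)] nn by auto
        ultimately show False by blast
      qed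
      have "(\<Sum>k<m. v k - u k) = (\<Sum>k<m. measure lebesgue {u k..v k})"
        using uv by (intro sum.cong) (auto simp: less_imp_le)
      also have "\<dots> = measure lebesgue (\<Union>k<m. {u k..v k})"
      proof (rule measure_negligible_finite_Union_image[symmetric])
        show "pairwise (\<lambda>k l. negligible ({u k..v k} \<inter> {u l..v l})) {..<m}"
        proof (unfold pairwise_def, intro ballI impI)
          fix k l assume kl0: "k \<in> {..<m}" "l \<in> {..<m}" "k \<noteq> l"
          then have kl: "k < m" "l < m" "k \<noteq> l" by auto
          have "{u k..v k} \<inter> {u l..v l} \<subseteq> {v k} \<or> {u k..v k} \<inter> {u l..v l} \<subseteq> {v l}"
            using ord[OF kl] uv[OF kl(1)] uv[OF kl(2)] by auto
          then show "negligible ({u k..v k} \<inter> {u l..v l})"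
            using negligible_subset negligible_sing by metis
        qed
      qed auto
      also have "\<dots> \<le> measure lebesgue T"
      proof (rule measure_mono_fmeasurable)
        show "(\<Union>k<m. {u k..v k}) \<subseteq> T"
        proof clarify
          fix k y assume "k < m" "y \<in> {u k..v k}"
          then show "y \<in> T" using uv[OF \<open>k < m\<close>] r(2)[of "fst (h k)"] by auto
        qed
      qed (use Tl in auto)
      finally have lt: "(\<Sum>k<m. v k - u k) < \<delta>" using mT by linarith
      have "-\<epsilon> < (\<Sum>k<m. f (v k) - f (u k))"
      proof (rule acd[of m u v])
        show "\<forall>k<m. a \<le> u k \<and> u k \<le> v k \<and> v k \<le> b" using uv by (auto simp: less_imp_le)
        show "\<forall>k<m. \<forall>l<m. k \<noteq> l \<longrightarrow> v k \<le> u l \<or> v l \<le> u k" using ord by blast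
        show "(\<Sum>k<m. v k - u k) < \<delta>" by (rule lt)
      qed
      also have "(\<Sum>k<m. f (v k) - f (u k)) = (\<Sum>(x,K)\<in>p2. f (Sup K) - f (Inf K))"
      proof -
        have "(\<Sum>(x,K)\<in>p2. f (Sup K) - f (Inf K)) = (\<Sum>k\<in>{0..<card p2}. (\<lambda>(x,K). f (Sup K) - f (Inf K)) (h k))"
          using sum.reindex_bij_betw[OF h] by metis
        then show ?thesis unfolding u_def v_def m_def by (simp add: lessThan_atLeast0 case_prod_unfold)
      qed
      finally show ?thesis .
    qed
    show ?thesis using tele S S1 S2 by (simp add: algebra_simps)
  qed
  show ?thesis
  proof (rule field_le_epsilon)
    fix e :: real assume e: "e > 0"
    have "0 < b - a + 1" using ab by simp
    then have "e / (b - a + 1) > 0" using e by simp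
    from key[OF this] have "f a \<le> f b + e / (b - a + 1) * (b - a + 1)" by (simp add: distrib_left)
    then show "f a \<le> f b + e" using \<open>0 < b - a + 1\<close> by simp
  qed
qed




lemma BR_D:
  assumes y: "y \<in> BR n A x" and jk: "j < n" "k < n" and yj: "0 < y j"
  shows "(\<Sum>l<n. A k l * x l) \<le> (\<Sum>l<n. A j l * x l)"
proof (rule ccontr)
  define W where "W = (\<lambda>i. \<Sum>l<n. A i l * x l)"
  assume "\<not> ?thesis"
  then have lt: "W j < W k" unfolding W_def by simp
  then have jnk: "j \<noteq> k" by auto
  have ys: "y \<in> std_simplex n" and ymax: "\<And>z. z \<in> std_simplex n \<Longrightarrow> bil n A z x \<le> bil n A y x"
    using y unfolding BR_def by auto
  define z where "z = (\<lambda>i. y i + (if i = k then y j else 0) - (if i = j then y j else 0))"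
  have zs: "z \<in> std_simplex n"
  proof -
    have "\<forall>i<n. 0 \<le> z i" using ys yj jnk unfolding std_simplex_def z_def by auto
    moreover have "(\<Sum>i<n. z i) = 1"
      using ys jk unfolding std_simplex_def z_def by (simp add: sum.distrib sum_subtractf)
    moreover have "\<forall>i\<ge>n. z i = 0" using ys jk unfolding std_simplex_def z_def by auto
    ultimately show ?thesis unfolding std_simplex_def by auto
  qed
  have "bil n A z x = bil n A y x + y j * W k - y j * W j"
  proof -
    have "bil n A z x = (\<Sum>i<n. y i * W i + (if i = k then y j * W i else 0) - (if i = j then y j * W i else 0))"
      unfolding bil_def z_def by (intro sum.cong) (auto simp: W_def ring_distribs)
    also have "\<dots> = (\<Sum>i<n. y i * W i) + (\<Sum>i<n. (if i = k then y j * W i else 0)) - (\<Sum>i<n. (if i = j then y j * W i else 0))"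
      by (simp add: sum.distrib sum_subtractf)
    also have "\<dots> = bil n A y x + y j * W k - y j * W j"
      using jk unfolding bil_def W_def by simp
    finally show ?thesis .
  qed
  moreover have "y j * W j < y j * W k" using lt yj by simp
  ultimately have "bil n A y x < bil n A z x" by simp
  with ymax[OF zs] show False by simp
qed

lemma BR_I:
  assumes ys: "y \<in> std_simplex n"
    and supp: "\<forall>i<n. 0 < y i \<longrightarrow> (\<forall>k<n. (\<Sum>l<n. A k l * x l) \<le> (\<Sum>l<n. A i l * x l))"
  shows "y \<in> BR n A x"
proof -
  define W where "W = (\<lambda>i. \<Sum>l<n. A i l * x l)"
  have yn: "\<forall>i<n. 0 \<le> y i" "(\<Sum>i<n. y i) = 1" using ys unfolding std_simplex_def by auto
  obtain j where j: "j < n" "0 < y j"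
  proof (rule ccontr)
    assume "\<not> thesis"
    then have "\<forall>i<n. y i = 0" using that yn(1) by force
    then have "(\<Sum>i<n. y i) = 0" by simp
    then show False using yn(2) by simp
  qed
  have Wj: "\<forall>k<n. W k \<le> W j" using supp j unfolding W_def by auto
  have "bil n A y x = (\<Sum>i<n. y i * W i)" unfolding bil_def W_def by simp
  also have "\<dots> = (\<Sum>i<n. y i * W j)"
  proof (rule sum.cong)
    fix i assume "i \<in> {..<n}"
    then have i: "i < n" by simp
    show "y i * W i = y i * W j"
    proof (cases "0 < y i")
      case True
      then have "W j \<le> W i" using supp i j unfolding W_def by auto
      then show ?thesis using Wj i by (simp add: antisym)
    next
      case False
      then show ?thesis using yn(1) i by (simp add: antisym)
    qed
  qed simp
  also have "\<dots> = W j" using yn(2) by (simp add: sum_distrib_right[symmetric])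
  finally have bY: "bil n A y x = W j" .
  have "bil n A z x \<le> bil n A y x" if zs: "z \<in> std_simplex n" for z
  proof -
    have zn: "\<forall>i<n. 0 \<le> z i" "(\<Sum>i<n. z i) = 1" using zs unfolding std_simplex_def by auto
    have "bil n A z x = (\<Sum>i<n. z i * W i)" unfolding bil_def W_def ..
    also have "\<dots> \<le> (\<Sum>i<n. z i * W j)"
      using zn(1) Wj by (intro sum_mono) (simp add: mult_left_mono)
    also have "\<dots> = W j" using zn(2) by (simp add: sum_distrib_right[symmetric])
    finally show ?thesis using bY by simp
  qed
  then show ?thesis unfolding BR_def using ys by auto
qed

lemma BR_ne:
  assumes "0 < n" shows "\<exists>y. y \<in> BR n A x"
proof -
  define W where "W = (\<lambda>i. \<Sum>l<n. A i l * x l)"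
  have "Max (W ` {..<n}) \<in> W ` {..<n}" using assms by (intro Max_in) auto
  then obtain j where j: "j < n" "W j = Max (W ` {..<n})" by auto
  have Wj: "\<forall>k<n. W k \<le> W j" using j by simp
  define y where "y = (\<lambda>i. if i = j then 1 else 0::real)"
  have ys: "y \<in> std_simplex n" using j unfolding std_simplex_def y_def by auto
  have "y \<in> BR n A x"
    by (rule BR_I[OF ys]) (use Wj in \<open>auto simp: y_def W_def\<close>)
  then show ?thesis by blast
qed




lemma less3: "(i::nat) < 3 \<Longrightarrow> i = 0 \<or> i = 1 \<or> i = 2" by auto

lemma block:
  fixes a :: "real \<Rightarrow> nat \<Rightarrow> real" and L :: "real \<Rightarrow> real"
  assumes L_def: "L = (\<lambda>s. a s 0 + a s 1 + a s 2)"
    and Lpos: "L t > 0"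
    and der: "\<forall>i<3. ((\<lambda>s. a s i) has_real_derivative da i) (at t)"
    and dy: "\<forall>i<3. da i = yy i - a t i"
    and ynn: "\<forall>i<3. 0 \<le> yy i"
    and supp: "\<forall>i<3. 0 < yy i \<longrightarrow> (\<forall>k<3. (\<Sum>l<3. matR e k l * a t l) \<le> (\<Sum>l<3. matR e i l * a t l))"
  shows "\<exists>dl db. (L has_real_derivative dl) (at t) \<and>
         (\<forall>i<3. ((\<lambda>s. if i < 3 then a s i / L s else 0) has_real_derivative db i) (at t)) \<and>
         (\<exists>y\<in>BR 3 (matR e) (\<lambda>i. if i < 3 then a t i / L t else 0).
            \<forall>i<3. db i = (1 + dl / L t) * (y i - (if i < 3 then a t i / L t else 0)))"
proof -
  define Y where "Y = yy 0 + yy 1 + yy 2"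
  have n3: "0 \<le> yy 0" "0 \<le> yy 1" "0 \<le> yy 2" using ynn by auto
  define dl where "dl = da 0 + da 1 + da 2"
  have dlY: "dl = Y - L t" unfolding dl_def Y_def L_def using dy by simp
  have dL: "(L has_real_derivative dl) (at t)"
    unfolding L_def dl_def using der by (auto intro!: derivative_eq_intros)
  define db where "db = (\<lambda>i. (da i * L t - a t i * dl) / (L t * L t))"
  have dbi: "((\<lambda>s. if i < 3 then a s i / L s else 0) has_real_derivative db i) (at t)" if i: "i < 3" for i
  proof -
    have "((\<lambda>s. a s i / L s) has_real_derivative db i) (at t)"
      unfolding db_def using der i dL Lpos by (intro DERIV_divide) auto
    then show ?thesis using i by simp
  qed
  have xbar: "(\<lambda>i. if i < 3 then a t i / L t else 0) = (\<lambda>i. if i < 3 then a t i / L t else 0)" ..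
  have "\<exists>y\<in>BR 3 (matR e) (\<lambda>i. if i < 3 then a t i / L t else 0).
            \<forall>i<3. db i = (1 + dl / L t) * (y i - (if i < 3 then a t i / L t else 0))"
  proof (cases "Y = 0")
    case True
    then have y0: "\<forall>i<3. yy i = 0" using n3 unfolding Y_def
      by (metis less3 add_nonneg_eq_0_iff add_nonneg_nonneg)
    obtain y where y: "y \<in> BR 3 (matR e) (\<lambda>i. if i < 3 then a t i / L t else 0)"
      using BR_ne[of 3] by auto
    have "\<forall>i<3. db i = (1 + dl / L t) * (y i - (if i < 3 then a t i / L t else 0))"
    proof (intro allI impI)
      fix i :: nat assume i: "i < 3"
      have "1 + dl / L t = 0" using dlY True Lpos by (simp add: field_simps)
      moreover have "db i = 0" unfolding db_def using dy y0 i dlY True Lpos by (simp add: algebra_simps)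
      ultimately show "db i = (1 + dl / L t) * (y i - (if i < 3 then a t i / L t else 0))" by simp
    qed
    then show ?thesis using y by blast
  next
    case False
    then have Ypos: "Y > 0" using n3 unfolding Y_def by linarith
    define y where "y = (\<lambda>i. if i < 3 then yy i / Y else 0)"
    have ys: "y \<in> std_simplex 3"
      unfolding std_simplex_def y_def using ynn Ypos
      by (auto simp: Y_def eval_nat_numeral add_divide_distrib[symmetric])
    have yBR: "y \<in> BR 3 (matR e) (\<lambda>i. if i < 3 then a t i / L t else 0)"
    proof (rule BR_I[OF ys], intro allI impI)
      fix i k :: nat assume i: "i < 3" and yi: "0 < y i" and k: "k < 3"
      have "0 < yy i" using yi i Ypos unfolding y_def by (simp add: zero_less_divide_iff)
      then have "(\<Sum>l<3. matR e k l * a t l) \<le> (\<Sum>l<3. matR e i l * a t l)" using supp i k by blast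
      then have "(\<Sum>l<3. matR e k l * a t l) / L t \<le> (\<Sum>l<3. matR e i l * a t l) / L t"
        using Lpos by (simp add: divide_right_mono)
      moreover have "\<And>j. (\<Sum>l<3. matR e j l * (if l < 3 then a t l / L t else 0)) = (\<Sum>l<3. matR e j l * a t l) / L t"
        by (simp add: sum_divide_distrib)
      ultimately show "(\<Sum>l<3. matR e k l * (if l < 3 then a t l / L t else 0)) \<le> (\<Sum>l<3. matR e i l * (if l < 3 then a t l / L t else 0))"
        by simp
    qed
    have "\<forall>i<3. db i = (1 + dl / L t) * (y i - (if i < 3 then a t i / L t else 0))"
    proof (intro allI impI)
      fix i :: nat assume i: "i < 3"
      show "db i = (1 + dl / L t) * (y i - (if i < 3 then a t i / L t else 0))"
      proof -
        have dai: "da i = yy i - a t i" using dy i by auto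
        show ?thesis unfolding db_def y_def dai dlY using i Lpos Ypos by (simp add: field_simps)
      qed
    qed
    then show ?thesis using yBR by blast
  qed
  then show ?thesis using dL dbi by blast
qed




lemma term_ineq:
  fixes u v t xu xv :: real
  assumes "u \<le> v" "v \<le> t" "0 \<le> xu"
  shows "-exp t * \<bar>xv - xu\<bar> \<le> exp v * xv - exp u * xu"
proof -
  have e1: "exp u \<le> exp v" "exp v \<le> exp t" using assms by auto
  have "0 \<le> xu * (exp v - exp u)" using assms(3) e1 by simp
  moreover have "-exp v * \<bar>xv - xu\<bar> \<le> exp v * (xv - xu)"
    by (cases "xv \<ge> xu") (auto simp: mult_le_0_iff algebra_simps)
  moreover have "-exp t * \<bar>xv - xu\<bar> \<le> -exp v * \<bar>xv - xu\<bar>"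
    using e1 by (simp add: mult_right_mono)
  ultimately show ?thesis by (simp add: algebra_simps)
qed

lemma vU1: "k < 3 \<Longrightarrow> (\<Sum>l<7. matU e k l * z l) = (\<Sum>l<3. matR e k l * z l) + (-10 * z 3 + (-1/3+e)*(z 4 + z 5 + z 6))"
  by (drule less3) (auto simp: eval_nat_numeral matU_def matR_def algebra_simps)

lemma vU2: "k < 3 \<Longrightarrow> (\<Sum>l<7. matU e (k+4) l * z l) = (\<Sum>l<3. matR e k l * z (l+4)) + (-1/3*(z 0 + z 1 + z 2) + 10 * z 3)"
  by (drule less3) (auto simp: eval_nat_numeral matU_def matR_def algebra_simps)

theorem lemma6:
  fixes e :: real and x :: "real \<Rightarrow> nat \<Rightarrow> real"
  assumes "0 < e" and "e < 2/9"
    and "BR_solution 7 (matU e) x"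
    and "\<not> (x 0 0 = x 0 1 \<and> x 0 1 = x 0 2)"
    and "\<not> (x 0 4 = x 0 5 \<and> x 0 5 = x 0 6)"
  defines "lam \<equiv> \<lambda>t. x t 0 + x t 1 + x t 2"
    and "mu \<equiv> \<lambda>t. x t 4 + x t 5 + x t 6"
  defines "xbar \<equiv> \<lambda>t i. if i < 3 then x t i / lam t else 0"
    and "xhat \<equiv> \<lambda>t i. if i < 3 then x t (i + 4) / mu t else 0"
  shows "(\<forall>t\<ge>0. 0 < lam t \<and> 0 < mu t) \<and>
    (AE t in lborel. 0 \<le> t \<longrightarrow>
      (\<exists>dl db. (lam has_real_derivative dl) (at t) \<and>
         (\<forall>i<3. ((\<lambda>s. xbar s i) has_real_derivative db i) (at t)) \<and>
         (\<exists>y\<in>BR 3 (matR e) (xbar t). \<forall>i<3. db i = (1 + dl / lam t) * (y i - xbar t i))) \<and>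
      (\<exists>dm dh. (mu has_real_derivative dm) (at t) \<and>
         (\<forall>i<3. ((\<lambda>s. xhat s i) has_real_derivative dh i) (at t)) \<and>
         (\<exists>y\<in>BR 3 (matR e) (xhat t). \<forall>i<3. dh i = (1 + dm / mu t) * (y i - xhat t i))))"
proof -
  define P where "P = (\<lambda>t. \<exists>d. (\<forall>i<7. ((\<lambda>s. x s i) has_real_derivative d i) (at t)) \<and>
             (\<exists>y\<in>BR 7 (matU e) (x t). \<forall>i<7. d i = y i - x t i))"
  have sim: "\<And>t. 0 \<le> t \<Longrightarrow> x t \<in> std_simplex 7"
    and acx: "\<And>i T. i < 7 \<Longrightarrow> 0 \<le> T \<Longrightarrow> abs_cont_on 0 T (\<lambda>t. x t i)"
    and AEh: "AE t in lborel. 0 \<le> t \<longrightarrow> P t"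
    using assms(3) unfolding BR_solution_def P_def by auto
  have nn: "0 \<le> x t i" if "0 \<le> t" for t i
    using sim[OF that] unfolding std_simplex_def by (cases "i < 7") auto
  obtain N where N: "{t \<in> space lborel. \<not> (0 \<le> t \<longrightarrow> P t)} \<subseteq> N" "emeasure lborel N = 0" "N \<in> sets lborel"
    using AEh by (rule AE_E)
  have Nnull: "N \<in> null_sets lborel" using N by auto
  have PN: "P s" if "0 \<le> s" "s \<notin> N" for s using N(1) that by auto
  have lower: "exp 0 * x 0 i \<le> exp t * x t i" if i: "i < 7" and t: "0 \<le> t" for i t
  proof (rule mono_AC[where f="\<lambda>s. exp s * x s i" and N=N, OF t Nnull])
    fix s assume s: "0 \<le> s" "s \<le> t" "s \<notin> N"
    obtain d yv where d: "\<forall>i<7. ((\<lambda>s. x s i) has_real_derivative d i) (at s)"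
      and yv: "yv \<in> BR 7 (matU e) (x s)" "\<forall>i<7. d i = yv i - x s i"
      using PN[OF s(1,3)] unfolding P_def by blast
    have "((\<lambda>s. exp s * x s i) has_real_derivative exp s * x s i + exp s * d i) (at s)"
      using d i by (auto intro!: derivative_eq_intros)
    moreover have "exp s * x s i + exp s * d i = exp s * yv i"
    proof -
      have di: "d i = yv i - x s i" using yv(2) i by blast
      show ?thesis unfolding di by (simp add: right_diff_distrib)
    qed
    moreover have "0 \<le> yv i" using yv(1) i unfolding BR_def std_simplex_def by auto
    ultimately show "\<exists>D\<ge>0. ((\<lambda>s. exp s * x s i) has_real_derivative D) (at s)"
      by (intro exI[of _ "exp s * yv i"]) simp
  next
    fix \<epsilon> :: real assume \<epsilon>: "\<epsilon> > 0"
    have "\<epsilon> / exp t > 0" using \<epsilon> by simp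
    have ac0: "abs_cont_on 0 t (\<lambda>s. x s i)" using acx[OF i t] .
    obtain \<delta> where \<delta>: "\<delta> > 0" and H: "\<forall>(m::nat) u v.
        (\<forall>k<m. 0 \<le> u k \<and> u k \<le> v k \<and> v k \<le> t) \<and>
        (\<forall>k<m. \<forall>l<m. k \<noteq> l \<longrightarrow> v k \<le> u l \<or> v l \<le> u k) \<and>
        (\<Sum>k<m. v k - u k) < \<delta>
        \<longrightarrow> (\<Sum>k<m. \<bar>x (v k) i - x (u k) i\<bar>) < \<epsilon> / exp t"
      using ac0[unfolded abs_cont_on_def, rule_format, OF \<open>\<epsilon> / exp t > 0\<close>] by blast
    show "\<exists>\<delta>>0. \<forall>(m::nat) u v. (\<forall>k<m. 0 \<le> u k \<and> u k \<le> v k \<and> v k \<le> t) \<and>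
        (\<forall>k<m. \<forall>l<m. k \<noteq> l \<longrightarrow> v k \<le> u l \<or> v l \<le> u k) \<and> (\<Sum>k<m. v k - u k) < \<delta>
        \<longrightarrow> -\<epsilon> < (\<Sum>k<m. exp (v k) * x (v k) i - exp (u k) * x (u k) i)"
    proof (intro exI[of _ \<delta>] conjI allI impI)
      show "\<delta> > 0" by fact
      fix m :: nat and u v :: "nat \<Rightarrow> real"
      assume c: "(\<forall>k<m. 0 \<le> u k \<and> u k \<le> v k \<and> v k \<le> t) \<and>
        (\<forall>k<m. \<forall>l<m. k \<noteq> l \<longrightarrow> v k \<le> u l \<or> v l \<le> u k) \<and> (\<Sum>k<m. v k - u k) < \<delta>"
      have "(\<Sum>k<m. \<bar>x (v k) i - x (u k) i\<bar>) < \<epsilon> / exp t" using H c by (rule_tac mp[OF spec[OF spec[OF spec[OF H]]]]) auto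
      then have "exp t * (\<Sum>k<m. \<bar>x (v k) i - x (u k) i\<bar>) < \<epsilon>"
        by (simp add: field_simps)
      then have "-\<epsilon> < (\<Sum>k<m. -exp t * \<bar>x (v k) i - x (u k) i\<bar>)"
        by (simp add: sum_negf sum_distrib_left[symmetric])
      also have "\<dots> \<le> (\<Sum>k<m. exp (v k) * x (v k) i - exp (u k) * x (u k) i)"
        using c nn by (intro sum_mono term_ineq) auto
      finally show "-\<epsilon> < (\<Sum>k<m. exp (v k) * x (v k) i - exp (u k) * x (u k) i)" .
    qed
  qed
  have posx: "0 < x t j" if "j < 7" "0 \<le> t" "0 < x 0 j" for t j
  proof -
    have "0 < exp 0 * x 0 j" using that by simp
    also have "\<dots> \<le> exp t * x t j" using lower that by blast
    finally show ?thesis by (simp add: zero_less_mult_iff)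
  qed
  have pos: "0 < lam t \<and> 0 < mu t" if t: "0 \<le> t" for t
  proof
    have "0 < x 0 0 \<or> 0 < x 0 1 \<or> 0 < x 0 2"
      using assms(4) nn[of 0 0] nn[of 0 1] nn[of 0 2] by force
    then have "0 < x t 0 \<or> 0 < x t 1 \<or> 0 < x t 2"
      using posx[of 0 t] posx[of 1 t] posx[of 2 t] t by auto
    then show "0 < lam t" unfolding assms(6)
      using nn[OF t, of 0] nn[OF t, of 1] nn[OF t, of 2] by auto
  next
    have "0 < x 0 4 \<or> 0 < x 0 5 \<or> 0 < x 0 6"
      using assms(5) nn[of 0 4] nn[of 0 5] nn[of 0 6] by force
    then have "0 < x t 4 \<or> 0 < x t 5 \<or> 0 < x t 6"
      using posx[of 4 t] posx[of 5 t] posx[of 6 t] t by auto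
    then show "0 < mu t" unfolding assms(7)
      using nn[OF t, of 4] nn[OF t, of 5] nn[OF t, of 6] by auto
  qed
  have main: "(\<exists>dl db. (lam has_real_derivative dl) (at t) \<and>
         (\<forall>i<3. ((\<lambda>s. xbar s i) has_real_derivative db i) (at t)) \<and>
         (\<exists>y\<in>BR 3 (matR e) (xbar t). \<forall>i<3. db i = (1 + dl / lam t) * (y i - xbar t i))) \<and>
      (\<exists>dm dh. (mu has_real_derivative dm) (at t) \<and>
         (\<forall>i<3. ((\<lambda>s. xhat s i) has_real_derivative dh i) (at t)) \<and>
         (\<exists>y\<in>BR 3 (matR e) (xhat t). \<forall>i<3. dh i = (1 + dm / mu t) * (y i - xhat t i)))"
    if t: "0 \<le> t" and Pt: "P t" for t
  proof -
    obtain d yv where d: "\<forall>i<7. ((\<lambda>s. x s i) has_real_derivative d i) (at t)"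
      and yv: "yv \<in> BR 7 (matU e) (x t)" "\<forall>i<7. d i = yv i - x t i"
      using Pt unfolding P_def by blast
    have ynn: "\<forall>i<7. 0 \<le> yv i" using yv(1) unfolding BR_def std_simplex_def by auto
    have supp1: "\<forall>i<3. 0 < yv i \<longrightarrow> (\<forall>k<3. (\<Sum>l<3. matR e k l * x t l) \<le> (\<Sum>l<3. matR e i l * x t l))"
    proof (intro allI impI)
      fix i k :: nat assume i: "i < 3" and y: "0 < yv i" and k: "k < 3"
      have "(\<Sum>l<7. matU e k l * x t l) \<le> (\<Sum>l<7. matU e i l * x t l)"
        using BR_D[OF yv(1), of i k] i k y by simp
      then show "(\<Sum>l<3. matR e k l * x t l) \<le> (\<Sum>l<3. matR e i l * x t l)"
        using vU1[OF i, of e "x t"] vU1[OF k, of e "x t"] by simp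
    qed
    have supp2: "\<forall>i<3. 0 < yv (i+4) \<longrightarrow> (\<forall>k<3. (\<Sum>l<3. matR e k l * x t (l+4)) \<le> (\<Sum>l<3. matR e i l * x t (l+4)))"
    proof (intro allI impI)
      fix i k :: nat assume i: "i < 3" and y: "0 < yv (i+4)" and k: "k < 3"
      have "(\<Sum>l<7. matU e (k+4) l * x t l) \<le> (\<Sum>l<7. matU e (i+4) l * x t l)"
        using BR_D[OF yv(1), of "i+4" "k+4"] i k y by simp
      then show "(\<Sum>l<3. matR e k l * x t (l+4)) \<le> (\<Sum>l<3. matR e i l * x t (l+4))"
        using vU2[OF i, of e "x t"] vU2[OF k, of e "x t"] by simp
    qed
    have B1: "\<exists>dl db. (lam has_real_derivative dl) (at t) \<and>
         (\<forall>i<3. ((\<lambda>s. if i < 3 then x s i / lam s else 0) has_real_derivative db i) (at t)) \<and>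
         (\<exists>y\<in>BR 3 (matR e) (\<lambda>i. if i < 3 then x t i / lam t else 0).
            \<forall>i<3. db i = (1 + dl / lam t) * (y i - (if i < 3 then x t i / lam t else 0)))"
      by (rule block[of lam x t d yv e]) (use assms(6) pos[OF t] d yv(2) ynn supp1 in auto)
    have B2: "\<exists>dl db. (mu has_real_derivative dl) (at t) \<and>
         (\<forall>i<3. ((\<lambda>s. if i < 3 then x s (i+4) / mu s else 0) has_real_derivative db i) (at t)) \<and>
         (\<exists>y\<in>BR 3 (matR e) (\<lambda>i. if i < 3 then x t (i+4) / mu t else 0).
            \<forall>i<3. db i = (1 + dl / mu t) * (y i - (if i < 3 then x t (i+4) / mu t else 0)))"
      by (rule block[of mu "\<lambda>s i. x s (i+4)" t "\<lambda>i. d (i+4)" "\<lambda>i. yv (i+4)" e])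
        (use assms(7) pos[OF t] d yv(2) ynn supp2 in auto)
    show ?thesis unfolding assms(8,9) using B1 B2 by simp
  qed
  show ?thesis
  proof
    show "\<forall>t\<ge>0. 0 < lam t \<and> 0 < mu t" using pos by blast
    show "AE t in lborel. 0 \<le> t \<longrightarrow>
      (\<exists>dl db. (lam has_real_derivative dl) (at t) \<and>
         (\<forall>i<3. ((\<lambda>s. xbar s i) has_real_derivative db i) (at t)) \<and>
         (\<exists>y\<in>BR 3 (matR e) (xbar t). \<forall>i<3. db i = (1 + dl / lam t) * (y i - xbar t i))) \<and>
      (\<exists>dm dh. (mu has_real_derivative dm) (at t) \<and>
         (\<forall>i<3. ((\<lambda>s. xhat s i) has_real_derivative dh i) (at t)) \<and>
         (\<exists>y\<in>BR 3 (matR e) (xhat t). \<forall>i<3. dh i = (1 + dm / mu t) * (y i - xhat t i)))"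
      using AEh
    proof (rule AE_mp)
      show "AE t in lborel. (0 \<le> t \<longrightarrow> P t) \<longrightarrow> (0 \<le> t \<longrightarrow>
      (\<exists>dl db. (lam has_real_derivative dl) (at t) \<and>
         (\<forall>i<3. ((\<lambda>s. xbar s i) has_real_derivative db i) (at t)) \<and>
         (\<exists>y\<in>BR 3 (matR e) (xbar t). \<forall>i<3. db i = (1 + dl / lam t) * (y i - xbar t i))) \<and>
      (\<exists>dm dh. (mu has_real_derivative dm) (at t) \<and>
         (\<forall>i<3. ((\<lambda>s. xhat s i) has_real_derivative dh i) (at t)) \<and>
         (\<exists>y\<in>BR 3 (matR e) (xhat t). \<forall>i<3. dh i = (1 + dm / mu t) * (y i - xhat t i))))"
        using main by (intro AE_I2) blast
    qed
  qed
qed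


end
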